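(* Fix integers $2\le r\le k$, a constant $\lambda_{k-r+1}\in\mathbb R$ and a constant $\tau>0$, and let $u(n)$ satisfy $u(n)\to\infty$, $u(n)/n\to0$. Let $t=t(n)$ be integers with $0\le t\le\tau u(n)$, and define $\lambda^{(s)}_j$ as below. Then for every $j\in\{k-r+1,\dots,k\}$, $$\exp\{\lambda^{(t)}_j\}=1+\binom{j}{k-r+1}\frac{t^{\,j-k+r-1}}{n^{\,j-k+r-1}}\bigl(e^{\lambda_{k-r+1}}-1\bigr)+O\Bigl(\frac{u(n)^{j-k+r-2}}{n^{j-k+r-1}}\max\Bigl\{1,\frac{u(n)^2}{n}\Bigr\}\Bigr),$$ where the implied constant depends only on $k,r,\lambda_{k-r+1},\tau$.
   Context: Let $N(s):=n-u(n)-s$. Set $\lambda^{(s)}_{k-r+1}:=\lambda_{k-r+1}$ for all $s=0,1,\dots,t$. For $j=k-r+2,\dots,k$ set $\lambda^{(0)}_j:=0$ and, for $s=1,\dots,t$, $$\lambda^{(s)}_j:=\lambda^{(s-1)}_j+\log\Bigl(1-\frac{j}{N(t-s+1)}+\frac{j}{N(t-s+1)}\exp\{\lambda^{(s-1)}_{j-1}\}\Bigr).$$ *)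

theory Defs
  imports Complex_Main
begin

text \<open>lam m lam0 Nb t s j  is  lambda^{(s)}_j, where m = k-r+1, lam0 = lambda_{k-r+1},
  Nb = n - u(n) (so that N(s) = Nb - s), and t = t(n).
  For s = Suc s', the quantity N(t-s+1) equals Nb - (t - s').\<close>
fun lam :: "nat \<Rightarrow> real \<Rightarrow> real \<Rightarrow> nat \<Rightarrow> nat \<Rightarrow> nat \<Rightarrow> real" where
  "lam m lam0 Nb t 0 j = (if j = m then lam0 else 0)"
| "lam m lam0 Nb t (Suc s) j =
     (if j = m then lam0
      else (let N = Nb - real (t - s) in
            lam m lam0 Nb t s j
            + ln (1 - real j / N + real j / N * exp (lam m lam0 Nb t s (j - 1)))))"

end

theory Submission
  imports Defs
begin


lemma h_bound:
  fixes a :: real assumes a: "a \<ge> 0"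
  shows "0 \<le> (a+1)^(e+2) - a^(e+2) - real(e+2)*a^(e+1) \<and>
         (a+1)^(e+2) - a^(e+2) - real(e+2)*a^(e+1) \<le> real(e+2)^2*(a+1)^e"
proof (induction e)
  case 0
  then show ?case by (simp add: power2_eq_square algebra_simps)
next
  case (Suc e)
  define H where "H = (a+1)^(e+2) - a^(e+2) - real(e+2)*a^(e+1)"
  have id: "(a+1)^(Suc e+2) - a^(Suc e+2) - real(Suc e+2)*a^(Suc e+1) = (a+1)*H + real(e+2)*a^(e+1)"
    unfolding H_def by (simp add: algebra_simps)
  have H0: "0 \<le> H" and H1: "H \<le> real(e+2)^2*(a+1)^e" using Suc unfolding H_def by auto
  have p0: "0 \<le> a^(e+1)" using a by simp
  have "(a+1)*H \<le> (a+1)*(real(e+2)^2*(a+1)^e)" using H1 a by (intro mult_left_mono) auto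
  also have "\<dots> = real(e+2)^2*(a+1)^(e+1)" by (simp add: algebra_simps)
  finally have b1: "(a+1)*H \<le> real(e+2)^2*(a+1)^(e+1)" .
  have "a^(e+1) \<le> (a+1)^(e+1)" using a by (intro power_mono) auto
  then have b2: "real(e+2)*a^(e+1) \<le> real(e+2)*(a+1)^(e+1)" by (intro mult_left_mono) auto
  have p1: "0 \<le> (a+1)^(e+1)" using a by simp
  have "real(e+2)^2*(a+1)^(e+1) + real(e+2)*(a+1)^(e+1) \<le> real(Suc e+2)^2*(a+1)^(Suc e)"
  proof -
    have "real(e+2)^2 + real(e+2) \<le> real(Suc e+2)^2" by (simp add: power2_eq_square algebra_simps)
    then have "(real(e+2)^2 + real(e+2))*(a+1)^(e+1) \<le> real(Suc e+2)^2*(a+1)^(e+1)"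
      using p1 by (intro mult_right_mono) auto
    then show ?thesis by (simp add: algebra_simps)
  qed
  moreover have "0 \<le> (a+1)*H" using H0 a by simp
  moreover have "0 \<le> real(e+2)*a^(e+1)" using p0 by simp
  ultimately show ?case unfolding id using b1 b2 by linarith
qed


definition BB :: "real \<Rightarrow> real \<Rightarrow> nat \<Rightarrow> real" where
  "BB U nn d = U powr (real d - 1) / nn^d * max 1 (U^2/nn)"

lemma BB_pos: assumes "U \<ge> 1" "U \<le> nn" shows "0 \<le> BB U nn d"
  using assms unfolding BB_def by (auto intro!: divide_nonneg_pos mult_nonneg_nonneg)

lemma BB_suc: assumes "U \<ge> 1" "U \<le> nn"
  shows "BB U nn (Suc d) = U^d / nn^(Suc d) * max 1 (U^2/nn)"
  using assms unfolding BB_def by (simp add: powr_realpow)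

lemma BB_step: assumes "U \<ge> 1" "U \<le> nn" shows "BB U nn d * (U/nn) = BB U nn (Suc d)"
proof -
  have U0: "U > 0" using assms by simp
  have "U powr (real d - 1) * U = U powr (real d - 1) * U powr 1" using U0 by simp
  also have "\<dots> = U powr (real d - 1 + 1)" by (simp only: powr_add)
  also have "\<dots> = U powr (real (Suc d) - 1)" by simp
  finally have e: "U powr (real d - 1) * U = U powr (real (Suc d) - 1)" .
  have "BB U nn d * (U/nn) = (U powr (real d - 1) * U) / (nn^d*nn) * max 1 (U^2/nn)"
    unfolding BB_def by simp
  also have "\<dots> = BB U nn (Suc d)" unfolding e BB_def by (simp add: mult.commute)
  finally show ?thesis .
qed

lemma BB_le: assumes "U \<ge> 1" "U \<le> nn" shows "BB U nn d \<le> (U/nn)^d"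
proof (cases d)
  case 0
  have U0: "U > 0" using assms by simp
  have m: "max 1 (U^2/nn) \<le> U" using assms by (auto simp: field_simps power2_eq_square)
  have "U powr (real 0 - 1) = inverse U" using U0 by (simp add: powr_minus)
  then have "BB U nn d = max 1 (U^2/nn) / U" using 0 unfolding BB_def by (simp add: divide_inverse mult.commute)
  also have "\<dots> \<le> 1" using m U0 by simp
  finally show ?thesis using 0 by simp
next
  case (Suc e)
  have n0: "nn > 0" using assms by simp
  have ue: "U^e \<le> U^(Suc e)" using assms by (intro power_increasing) auto
  have "U^e / nn^(Suc e) \<le> U^(Suc e) / nn^(Suc e)" using ue n0 by (intro divide_right_mono) auto
  also have "\<dots> = (U/nn)^(Suc e)" by (simp only: power_divide)
  finally have a1: "U^e / nn^(Suc e) \<le> (U/nn)^(Suc e)" .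
  have a2: "U^e / nn^(Suc e) * (U^2/nn) \<le> (U/nn)^(Suc e)"
  proof -
    have "U^e / nn^(Suc e) * (U^2/nn) = (U/nn)^(Suc e) * (U/nn)"
      by (simp add: power_divide field_simps power2_eq_square)
    also have "\<dots> \<le> (U/nn)^(Suc e)" using assms n0 by (intro mult_left_le) auto
    finally show ?thesis .
  qed
  have "U^e / nn^(Suc e) * max 1 (U^2/nn) \<le> (U/nn)^(Suc e)"
    using a1 a2 by (cases "1 \<le> U^2/nn") (simp_all only: max_def if_True if_False mult_1_right)
  then show ?thesis using Suc BB_suc[OF assms] by simp
qed

lemma BB_ge1: assumes "U \<ge> 1" "U \<le> nn" shows "(U/nn)^(Suc d + 1) \<le> BB U nn (Suc d)"
proof -
  have "(U/nn)^(Suc d + 1) = U^d / nn^(Suc d) * (U^2/nn)"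
    by (simp add: power_divide field_simps power2_eq_square)
  also have "\<dots> \<le> U^d / nn^(Suc d) * max 1 (U^2/nn)"
    using assms by (intro mult_left_mono) auto
  finally show ?thesis using BB_suc[OF assms] by simp
qed

lemma BB_ge2: assumes "U \<ge> 1" "U \<le> nn" shows "U^d / nn^(Suc d) \<le> BB U nn (Suc d)"
proof -
  have "U^d / nn^(Suc d) * 1 \<le> U^d / nn^(Suc d) * max 1 (U^2/nn)"
    using assms by (intro mult_left_mono) auto
  then show ?thesis using BB_suc[OF assms] by simp
qed

lemma lam_m: "lam m lam0 Nb t s m = lam0"
  by (cases s) auto

lemma lam_0: "j \<noteq> m \<Longrightarrow> lam m lam0 Nb t 0 j = 0"
  by simp

lemma lam_rec:
  assumes "j \<noteq> m" "real j \<le> Nb - real (t - s)" "0 < real j"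
  shows "exp (lam m lam0 Nb t (Suc s) j) - 1 =
    (exp (lam m lam0 Nb t s j) - 1) + exp (lam m lam0 Nb t s j) * real j * (exp (lam m lam0 Nb t s (j-1)) - 1) / (Nb - real (t - s))"
proof -
  define N where "N = Nb - real (t - s)"
  define E where "E = exp (lam m lam0 Nb t s (j-1))"
  have N0: "N > 0" using assms N_def by linarith
  have "0 \<le> 1 - real j / N" using assms N0 N_def by (simp add: field_simps)
  moreover have "0 < real j / N * E" using N0 assms E_def by simp
  ultimately have pos: "0 < 1 - real j / N + real j / N * E" by linarith
  have "lam m lam0 Nb t (Suc s) j = lam m lam0 Nb t s j + ln (1 - real j / N + real j / N * E)"
    using assms(1) by (simp add: N_def E_def Let_def)
  then have eq: "exp (lam m lam0 Nb t (Suc s) j) = exp (lam m lam0 Nb t s j) * (1 - real j / N + real j / N * E)"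
    using pos by (simp add: exp_add)
  have gen: "A - 1 = (B - 1) + B * real j * (E - 1) / N" if h: "A = B * (1 - real j / N + real j / N * E)" for A B
    unfolding h using N0 by (simp add: field_simps)
  show ?thesis unfolding N_def[symmetric] E_def[symmetric] by (rule gen[OF eq])
qed



lemma abs6: fixes a b c d f :: real shows "\<bar>a+b+c+d-f\<bar> \<le> \<bar>a\<bar>+\<bar>b\<bar>+\<bar>c\<bar>+\<bar>d\<bar>+\<bar>f\<bar>"
  by arith

lemma step_lemma:
  fixes nn U tau x K' Cb C c Bp B :: real and t d :: nat and y z :: "nat \<Rightarrow> real"
  assumes nn: "nn > 0" and U1: "U \<ge> 1" and tau: "tau > 0" and UN: "(1+tau)*U \<le> nn/2"
    and tt: "real t \<le> tau*U" and d1: "d \<ge> 1"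
    and c0: "c \<ge> 0" and cN: "c \<le> nn/2" and cC: "c*Cb = real d*C" and Cb0: "Cb \<ge> 0" and C0: "C \<ge> 0"
    and K'0: "K' \<ge> 0"
    and y0: "y 0 = 0"
    and rec: "\<forall>s<t. y (Suc s) = y s + (1 + y s) * c * z s / (nn - U - real (t - s))"
    and hz: "\<forall>s\<le>t. \<bar>z s - x*Cb*(real s/nn)^(d-1)\<bar> \<le> K' * Bp"
    and Bp0: "0 \<le> Bp" and Bp1: "Bp \<le> (U/nn)^(d-1)"
    and small: "4*c*(\<bar>x\<bar>*Cb*tau^(d-1) + K')*tau*(U/nn) \<le> 1"
    and B1: "Bp * (U/nn) \<le> B" and B2: "(U/nn)^(d+1) \<le> B" and B3: "U^(d-1)/nn^d \<le> B"
  shows "\<forall>s\<le>t. \<bar>y s - x*C*(real s/nn)^d\<bar> \<le>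
     (2*c*tau*K' + 2*c*tau*(1+tau)*\<bar>x\<bar>*Cb*tau^(d-1)
      + 2*tau*(4*c*(\<bar>x\<bar>*Cb*tau^(d-1) + K')*tau)*c*(\<bar>x\<bar>*Cb*tau^(d-1) + K')
      + \<bar>x\<bar>*C*real d^2*tau^(d-1)) * B"
proof -
  obtain e where de: "d = Suc e" using d1 by (cases d) auto
  define q where "q = U/nn"
  have q0: "0 < q" using nn U1 q_def by simp
  have Uq: "U = q*nn" using nn q_def by simp
  have "tau*U \<ge> 0" using U1 tau by simp
  then have "U \<le> (1+tau)*U" by (simp add: algebra_simps)
  then have Unn: "U \<le> nn" using UN nn by linarith
  then have q1: "q \<le> 1" using nn unfolding q_def by simp
  define Z where "Z = \<bar>x\<bar>*Cb*tau^(d-1) + K'"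
  have Z0: "Z \<ge> 0" using Z_def Cb0 K'0 tau by simp
  define A where "A = 4*c*Z*tau"
  have A0: "A \<ge> 0" using A_def c0 Z0 tau by simp
  define g where "g s = x*Cb*(real s/nn)^(d-1)" for s
  define f where "f s = x*C*(real s/nn)^d" for s
  have sq: "real s/nn \<le> tau*q" if "s \<le> t" for s
  proof -
    have "real s \<le> tau*U" using that tt by linarith
    then show ?thesis using nn unfolding q_def by (simp add: field_simps)
  qed
  have gb: "\<bar>g s\<bar> \<le> \<bar>x\<bar>*Cb*tau^(d-1)*q^(d-1)" if "s \<le> t" for s
  proof -
    have "(real s/nn)^(d-1) \<le> (tau*q)^(d-1)" using sq[OF that] nn by (intro power_mono) auto
    then have "\<bar>x\<bar>*Cb*(real s/nn)^(d-1) \<le> \<bar>x\<bar>*Cb*(tau*q)^(d-1)"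
      using Cb0 by (intro mult_left_mono) auto
    then show ?thesis unfolding g_def using Cb0 nn by (simp add: abs_mult power_mult_distrib mult.assoc)
  qed
  have zb: "\<bar>z s\<bar> \<le> Z*q^(d-1)" if "s \<le> t" for s
  proof -
    have "\<bar>z s - g s\<bar> \<le> K' * Bp" using hz that g_def by simp
    moreover have "K'*Bp \<le> K'*q^(d-1)" using Bp1 K'0 q_def by (intro mult_left_mono) auto
    ultimately show ?thesis using gb[OF that] unfolding Z_def by (simp add: algebra_simps) linarith
  qed
  define N where "N s = nn - U - real (t - s)" for s
  have Nb: "nn/2 \<le> N s \<and> N s \<le> nn \<and> nn - N s \<le> (1+tau)*U" if "s < t" for s
  proof -
    have "real (t - s) \<le> real t" by simp
    then have "real (t-s) \<le> tau*U" using tt by linarith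
    then show ?thesis unfolding N_def using UN U1 by (simp add: algebra_simps)
  qed
  have invN: "1/N s \<le> 2/nn" "N s > 0" if "s < t" for s
    using Nb[OF that] nn by (auto simp: field_simps)
  define a where "a = 4*c*Z*q^(d-1)/nn"
  have a0: "a \<ge> 0" using a_def c0 Z0 q0 nn by simp
  have ta: "real t * a \<le> A*q^d"
  proof -
    have "real t * a \<le> tau*U*a" using tt a0 by (intro mult_right_mono) auto
    also have "\<dots> = A*(q*q^(d-1))" unfolding a_def A_def Uq using nn by (simp add: field_simps)
    also have "q*q^(d-1) = q^d" unfolding de by simp
    finally show ?thesis .
  qed
  have Aq1: "A*q^d \<le> 1"
  proof -
    have "q^d \<le> q" using q0 q1 d1 by (metis power_decreasing power_one_right less_le)
    then have "A*q^d \<le> A*q" using A0 by (intro mult_left_mono)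
    also have "A*q \<le> 1" using small unfolding A_def Z_def q_def by simp
    finally show ?thesis .
  qed
  have crude: "s \<le> t \<longrightarrow> \<bar>y s\<bar> \<le> real s * a" for s
  proof (induction s)
    case 0 then show ?case using y0 by simp
  next
    case (Suc s)
    show ?case
    proof
      assume st: "Suc s \<le> t"
      then have st': "s < t" by simp
      have ys: "\<bar>y s\<bar> \<le> real s * a" using Suc st by simp
      have "real s * a \<le> real t * a" using st a0 by (intro mult_right_mono) auto
      then have ys1: "\<bar>y s\<bar> \<le> 1" using ys ta Aq1 by linarith
      have "\<bar>(1 + y s) * c * z s / N s\<bar> = \<bar>1 + y s\<bar> * c * \<bar>z s\<bar> * (1/N s)"
        using c0 invN(2)[OF st'] by (simp add: abs_mult)
      also have "\<dots> \<le> 2 * c * (Z*q^(d-1)) * (2/nn)"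
        using ys1 zb[of s] st' invN[OF st'] c0 by (intro mult_mono) auto
      also have "\<dots> = a" unfolding a_def by simp
      finally have "\<bar>(1 + y s) * c * z s / N s\<bar> \<le> a" .
      moreover have eq: "y (Suc s) = y s + (1 + y s) * c * z s / N s" using rec st' N_def by simp
      have "\<bar>y (Suc s)\<bar> \<le> \<bar>y s\<bar> + \<bar>(1 + y s) * c * z s / N s\<bar>" unfolding eq by (rule abs_triangle_ineq)
      moreover have "real (Suc s) * a = real s * a + a" by (simp add: algebra_simps)
      ultimately show "\<bar>y (Suc s)\<bar> \<le> real (Suc s) * a" using ys by linarith
    qed
  qed
  have yb: "\<bar>y s\<bar> \<le> A*q^d" if "s \<le> t" for s
  proof -
    have "real s * a \<le> real t * a" using that a0 by (intro mult_right_mono) auto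
    then show ?thesis using crude[of s] that ta by linarith
  qed
  define w where "w = (if d = 1 then 0 else real d^2 * real t^(d-2))"
  define eps where "eps = c*K'*Bp*(2/nn) + c*(\<bar>x\<bar>*Cb*tau^(d-1)*q^(d-1))*((1+tau)*U*2/nn^2)
     + A*q^d*c*(Z*q^(d-1))*(2/nn) + \<bar>x\<bar>*C*w/nn^d"
  have fine: "s \<le> t \<longrightarrow> \<bar>y s - f s\<bar> \<le> real s * eps" for s
  proof (induction s)
    case 0 then show ?case using y0 d1 f_def by simp
  next
    case (Suc s)
    show ?case
    proof
      assume st: "Suc s \<le> t"
      then have st': "s < t" and sle: "s \<le> t" by simp_all
      have IH: "\<bar>y s - f s\<bar> \<le> real s * eps" using Suc st by simp
      define h where "h = (real s+1)^d - real s^d - real d*real s^(d-1)"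
      have decomp: "y (Suc s) - f (Suc s) = (y s - f s) + c*(z s - g s)/N s + c*g s*(1/N s - 1/nn)
          + y s*c*z s/N s - x*C*h/nn^d"
      proof -
        have r: "y (Suc s) = y s + (1 + y s) * c * z s / N s" using rec st' N_def by simp
        have A1: "c * g s / nn = x*(real d*C)*real s^(d-1)/nn^d"
          unfolding g_def cC[symmetric] using nn unfolding de
          by (simp add: power_divide field_simps)
        have A2: "f (Suc s) - f s = x*C*((real s+1)^d - real s^d)/nn^d"
          unfolding f_def by (simp add: power_divide diff_divide_distrib algebra_simps)
        have E: "c * g s / nn - (f (Suc s) - f s) = - x*C*h/nn^d"
          unfolding A1 A2 h_def using nn by (simp add: field_simps)
        have I1: "(1 + y s)*c*z s/N s = c*(z s - g s)/N s + c*g s*(1/N s - 1/nn) + y s*c*z s/N s + c*g s/nn"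
          using invN(2)[OF st'] nn by (simp add: field_simps)
        show ?thesis using r E I1 by linarith
      qed
      have T1: "\<bar>c*(z s - g s)/N s\<bar> \<le> c*K'*Bp*(2/nn)"
      proof -
        have "\<bar>c*(z s - g s)/N s\<bar> = c*\<bar>z s - g s\<bar>*(1/N s)" using c0 invN(2)[OF st'] by (simp add: abs_mult)
        also have "\<dots> \<le> c*(K'*Bp)*(2/nn)" using hz sle g_def invN[OF st'] c0 K'0 Bp0
          by (intro mult_mono mult_left_mono) auto
        finally show ?thesis by simp
      qed
      have T2: "\<bar>c*g s*(1/N s - 1/nn)\<bar> \<le> c*(\<bar>x\<bar>*Cb*tau^(d-1)*q^(d-1))*((1+tau)*U*2/nn^2)"
      proof -
        have e: "1/N s - 1/nn = (nn - N s)/(N s * nn)" using invN(2)[OF st'] nn by (simp add: field_simps)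
        have "\<bar>1/N s - 1/nn\<bar> \<le> (1+tau)*U*2/nn^2"
        proof -
          have "\<bar>1/N s - 1/nn\<bar> = (nn - N s)/(N s * nn)" unfolding e using Nb[OF st'] invN[OF st'] nn by simp
          also have "\<dots> \<le> ((1+tau)*U)/((nn/2)*nn)" using Nb[OF st'] invN[OF st'] nn
            by (intro frac_le mult_right_mono) auto
          also have "\<dots> = (1+tau)*U*2/nn^2" by (simp add: power2_eq_square field_simps)
          finally show ?thesis .
        qed
        note nb = this
        have X0: "0 \<le> \<bar>x\<bar>*Cb*tau^(d-1)*q^(d-1)" using Cb0 tau q0 by simp
        have "\<bar>c*g s*(1/N s - 1/nn)\<bar> = (c*\<bar>g s\<bar>)*\<bar>1/N s - 1/nn\<bar>" using c0 by (simp add: abs_mult)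
        also have "\<dots> \<le> (c*(\<bar>x\<bar>*Cb*tau^(d-1)*q^(d-1)))*((1+tau)*U*2/nn^2)"
          using nb gb[OF sle] c0 X0 by (intro mult_mono mult_left_mono) auto
        finally show ?thesis .
      qed
      have T3: "\<bar>y s*c*z s/N s\<bar> \<le> A*q^d*c*(Z*q^(d-1))*(2/nn)"
      proof -
        have "\<bar>y s*c*z s/N s\<bar> = \<bar>y s\<bar>*c*\<bar>z s\<bar>*(1/N s)" using c0 invN(2)[OF st'] by (simp add: abs_mult)
        also have "\<dots> \<le> A*q^d*c*(Z*q^(d-1))*(2/nn)" using yb[OF sle] zb[OF sle] invN[OF st'] c0 A0 q0
          by (intro mult_mono) auto
        finally show ?thesis .
      qed
      have T4: "\<bar>x*C*h/nn^d\<bar> \<le> \<bar>x\<bar>*C*w/nn^d"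
      proof -
        have "\<bar>h\<bar> \<le> w"
        proof (cases "d = 1")
          case True then show ?thesis unfolding h_def w_def by simp
        next
          case False
          then obtain e' where de': "d = e' + 2" using d1 by (metis add.commute add_2_eq_Suc le_iff_add Suc_le_lessD le_neq_implies_less less_imp_Suc_add plus_1_eq_Suc)
          have hb: "0 \<le> h \<and> h \<le> real d^2*(real s+1)^e'"
            using h_bound[of "real s" e'] unfolding h_def de' by (simp add: add.commute)
          have "(real s+1)^e' \<le> real t^e'" using st by (intro power_mono) auto
          then have m: "real d^2*(real s+1)^e' \<le> real d^2*real t^e'" by (intro mult_left_mono) auto
          have "w = real d^2*real t^e'" unfolding w_def using False de' by simp
          then show ?thesis using hb m by (simp only: abs_of_nonneg) linarith
        qed
        then show ?thesis using C0 nn by (simp add: abs_mult divide_right_mono mult_left_mono)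
      qed
      have "\<bar>y (Suc s) - f (Suc s)\<bar> \<le> \<bar>y s - f s\<bar> + eps"
        unfolding decomp eps_def using T1 T2 T3 T4 abs6[of "y s - f s" "c*(z s - g s)/N s" "c*g s*(1/N s - 1/nn)" "y s*c*z s/N s" "x*C*h/nn^d"] by linarith
      then show "\<bar>y (Suc s) - f (Suc s)\<bar> \<le> real (Suc s) * eps" using IH by (simp add: algebra_simps)
    qed
  qed
  have B0: "0 \<le> B" using B2 q0 q_def by (smt (verit) zero_le_power)
  have tU: "real t \<le> tau*U" by (rule tt)
  have X0: "0 \<le> \<bar>x\<bar>*Cb*tau^(d-1)*q^(d-1)" using Cb0 tau q0 by simp
  define e1 where "e1 = c*K'*Bp*(2/nn)"
  define e2 where "e2 = c*(\<bar>x\<bar>*Cb*tau^(d-1)*q^(d-1))*((1+tau)*U*2/nn^2)"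
  define e3 where "e3 = A*q^d*c*(Z*q^(d-1))*(2/nn)"
  define e4 where "e4 = \<bar>x\<bar>*C*w/nn^d"
  have w0: "0 \<le> w" unfolding w_def by simp
  have e10: "0 \<le> e1" unfolding e1_def using c0 K'0 Bp0 nn by simp
  have e20: "0 \<le> e2" unfolding e2_def using c0 X0 nn U1 tau by simp
  have e30: "0 \<le> e3" unfolding e3_def using c0 A0 Z0 q0 nn by simp
  have e40: "0 \<le> e4" unfolding e4_def using C0 w0 nn by simp
  have epsd: "eps = e1 + e2 + e3 + e4" unfolding eps_def e1_def e2_def e3_def e4_def by simp
  have E1: "real t * e1 \<le> (2*c*tau*K') * B"
  proof -
    have "real t * e1 \<le> tau*U*e1" using tU e10 by (intro mult_right_mono)
    also have "\<dots> = (2*c*tau*K') * (Bp*(U/nn))" unfolding e1_def by (simp add: field_simps)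
    also have "\<dots> \<le> (2*c*tau*K') * B" using B1 c0 tau K'0 by (intro mult_left_mono) auto
    finally show ?thesis .
  qed
  have E2: "real t * e2 \<le> (2*c*tau*(1+tau)*\<bar>x\<bar>*Cb*tau^(d-1)) * B"
  proof -
    have "real t * e2 \<le> tau*U*e2" using tU e20 by (intro mult_right_mono)
    also have "\<dots> = (2*c*tau*(1+tau)*\<bar>x\<bar>*Cb*tau^(d-1)) * q^(d+1)"
      unfolding e2_def Uq using nn unfolding de by (simp add: field_simps power2_eq_square)
    also have "\<dots> \<le> (2*c*tau*(1+tau)*\<bar>x\<bar>*Cb*tau^(d-1)) * B" using B2 c0 tau Cb0 unfolding q_def
      by (intro mult_left_mono) auto
    finally show ?thesis .
  qed
  have E3: "real t * e3 \<le> (2*tau*A*c*Z) * B"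
  proof -
    have "real t * e3 \<le> tau*U*e3" using tU e30 by (intro mult_right_mono)
    also have "\<dots> = (2*tau*A*c*Z) * q^(e+e+2)"
      unfolding e3_def Uq using nn unfolding de by (simp add: field_simps power2_eq_square power_add)
    also have "\<dots> \<le> (2*tau*A*c*Z) * q^(d+1)"
    proof -
      have "q^(e+e+2) \<le> q^(d+1)" unfolding de using q0 q1 by (intro power_decreasing) auto
      then show ?thesis using tau A0 c0 Z0 by (intro mult_left_mono) auto
    qed
    also have "\<dots> \<le> (2*tau*A*c*Z) * B" using B2 c0 tau A0 Z0 unfolding q_def
      by (intro mult_left_mono) auto
    finally show ?thesis .
  qed
  have E4: "real t * e4 \<le> (\<bar>x\<bar>*C*real d^2*tau^(d-1)) * B"
  proof -
    have tw: "real t * w \<le> real d^2 * (tau*U)^(d-1)"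
    proof (cases "d = 1")
      case True then show ?thesis unfolding w_def by simp
    next
      case False
      then obtain e' where de': "d = e' + 2" using d1 by (metis add.commute add_2_eq_Suc le_iff_add Suc_le_lessD le_neq_implies_less less_imp_Suc_add plus_1_eq_Suc)
      have "real t * w = real d^2 * real t^(d-1)" unfolding w_def using False de' by simp
      also have "\<dots> \<le> real d^2 * (tau*U)^(d-1)" using tU by (intro mult_left_mono power_mono) auto
      finally show ?thesis .
    qed
    have "real t * e4 = \<bar>x\<bar>*C*(real t*w)/nn^d" unfolding e4_def by simp
    also have "\<dots> \<le> \<bar>x\<bar>*C*(real d^2 * (tau*U)^(d-1))/nn^d" using tw C0 nn
      by (intro divide_right_mono mult_left_mono) auto
    also have "\<dots> = (\<bar>x\<bar>*C*real d^2*tau^(d-1)) * (U^(d-1)/nn^d)" by (simp add: power_mult_distrib)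
    also have "\<dots> \<le> (\<bar>x\<bar>*C*real d^2*tau^(d-1)) * B" using B3 C0 tau by (intro mult_left_mono) auto
    finally show ?thesis .
  qed
  have eps0: "0 \<le> eps" using epsd e10 e20 e30 e40 by simp
  show ?thesis
  proof (intro allI impI)
    fix s assume sle: "s \<le> t"
    have "\<bar>y s - x*C*(real s/nn)^d\<bar> \<le> real s * eps" using fine[of s] sle f_def by simp
    also have "\<dots> \<le> real t * eps" using sle eps0 by (intro mult_right_mono) auto
    also have "\<dots> = real t * e1 + real t * e2 + real t * e3 + real t * e4" unfolding epsd by (simp add: algebra_simps)
    also have "\<dots> \<le> (2*c*tau*K' + 2*c*tau*(1+tau)*\<bar>x\<bar>*Cb*tau^(d-1)
      + 2*tau*(4*c*(\<bar>x\<bar>*Cb*tau^(d-1) + K')*tau)*c*(\<bar>x\<bar>*Cb*tau^(d-1) + K')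
      + \<bar>x\<bar>*C*real d^2*tau^(d-1)) * B"
      using E1 E2 E3 E4 unfolding A_def Z_def by (simp add: algebra_simps)
    finally show "\<bar>y s - x*C*(real s/nn)^d\<bar> \<le> (2*c*tau*K' + 2*c*tau*(1+tau)*\<bar>x\<bar>*Cb*tau^(d-1)
      + 2*tau*(4*c*(\<bar>x\<bar>*Cb*tau^(d-1) + K')*tau)*c*(\<bar>x\<bar>*Cb*tau^(d-1) + K')
      + \<bar>x\<bar>*C*real d^2*tau^(d-1)) * B" .
  qed
qed



lemma binom_id: "real (m + Suc d) * real ((m+d) choose m) = real (Suc d) * real ((m + Suc d) choose m)"
proof -
  have a: "(m+d) choose m = (m+d) choose d" using binomial_symmetric[of m "m+d"] by simp
  have b: "(m + Suc d) choose m = (m + Suc d) choose (Suc d)" using binomial_symmetric[of m "m+Suc d"] by simp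
  have "Suc (m+d) * ((m+d) choose d) = (Suc (m+d) choose Suc d) * Suc d" by (rule Suc_times_binomial_eq)
  then have "(m + Suc d) * ((m+d) choose m) = Suc d * ((m + Suc d) choose m)" unfolding a b by simp
  then show ?thesis by (metis of_nat_mult)
qed

lemma mainS:
  fixes m :: nat and lam0 tau :: real and u :: "nat \<Rightarrow> real"
  assumes tau: "tau > 0"
    and uinf: "filterlim u at_top sequentially"
    and uo: "(\<lambda>n. u n / real n) \<longlonglongrightarrow> 0"
  shows "\<exists>K\<ge>0. \<forall>\<^sub>F n in sequentially. \<forall>t::nat. real t \<le> tau * u n \<longrightarrow>
     (\<forall>s\<le>t. \<bar>(exp (lam m lam0 (real n - u n) t s (m+d)) - 1)
        - (exp lam0 - 1) * real ((m+d) choose m) * (real s / real n)^d\<bar> \<le> K * BB (u n) (real n) d)"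
proof (induction d)
  case 0
  show ?case by (intro exI[of _ 0]) (simp add: lam_m)
next
  case (Suc d)
  from Suc obtain K' where K'0: "K' \<ge> 0" and evK: "\<forall>\<^sub>F n in sequentially. \<forall>t::nat. real t \<le> tau * u n \<longrightarrow>
     (\<forall>s\<le>t. \<bar>(exp (lam m lam0 (real n - u n) t s (m+d)) - 1)
        - (exp lam0 - 1) * real ((m+d) choose m) * (real s / real n)^d\<bar> \<le> K' * BB (u n) (real n) d)"
    by blast
  define x where "x = exp lam0 - 1"
  define c where "c = real (m + Suc d)"
  define Cb where "Cb = real ((m+d) choose m)"
  define C where "C = real ((m + Suc d) choose m)"
  define Z where "Z = \<bar>x\<bar>*Cb*tau^(Suc d - 1) + K'"
  have c0: "c > 0" unfolding c_def by simp
  have Cb0: "Cb \<ge> 0" and C0: "C \<ge> 0" unfolding Cb_def C_def by simp_all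
  have Z0: "Z \<ge> 0" unfolding Z_def using Cb0 K'0 tau by simp
  define eps where "eps = min (1/(2*(1+tau))) (1/(4*c*Z*tau+1))"
  have cZt: "0 \<le> 4*c*Z*tau" using tau c0 Z0 by simp
  have "0 < 1/(4*c*Z*tau+1)" using cZt by (intro divide_pos_pos) linarith+
  then have eps0: "eps > 0" unfolding eps_def using tau by simp
  have ev1: "\<forall>\<^sub>F n in sequentially. 1 \<le> u n" using uinf unfolding filterlim_at_top by blast
  have ev2: "\<forall>\<^sub>F n in sequentially. u n / real n < eps" using order_tendstoD(2)[OF uo eps0] .
  have ev3: "\<forall>\<^sub>F n in sequentially. 2*c + 1 \<le> real n"
    using filterlim_real_sequentially unfolding filterlim_at_top by blast
  define K where "K = 2*c*tau*K' + 2*c*tau*(1+tau)*\<bar>x\<bar>*Cb*tau^(Suc d-1)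
      + 2*tau*(4*c*(\<bar>x\<bar>*Cb*tau^(Suc d-1) + K')*tau)*c*(\<bar>x\<bar>*Cb*tau^(Suc d-1) + K')
      + \<bar>x\<bar>*C*real (Suc d)^2*tau^(Suc d-1)"
  have K0: "K \<ge> 0" unfolding K_def using c0 tau K'0 Cb0 C0 by simp
  show ?case
  proof (intro exI[of _ K] conjI K0)
    show "\<forall>\<^sub>F n in sequentially. \<forall>t::nat. real t \<le> tau * u n \<longrightarrow>
     (\<forall>s\<le>t. \<bar>(exp (lam m lam0 (real n - u n) t s (m+Suc d)) - 1)
        - (exp lam0 - 1) * real ((m+Suc d) choose m) * (real s / real n)^(Suc d)\<bar> \<le> K * BB (u n) (real n) (Suc d))"
      using ev1 ev2 ev3 evK
    proof eventually_elim
      case (elim n)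
      define nn where "nn = real n"
      define U where "U = u n"
      have nn0: "nn > 0" using elim(3) c0 nn_def by linarith
      have U1: "1 \<le> U" using elim(1) U_def by simp
      have Ue: "U < eps * nn" using elim(2) nn0 unfolding U_def nn_def by (simp add: field_simps)
      have "(1+tau)*U \<le> (1+tau)*(eps*nn)" using Ue tau by (intro mult_left_mono) auto
      also have "\<dots> \<le> (1+tau)*((1/(2*(1+tau)))*nn)" unfolding eps_def using tau nn0
        by (intro mult_left_mono mult_right_mono) auto
      also have "\<dots> = nn/2" using tau by (simp add: field_simps)
      finally have UN: "(1+tau)*U \<le> nn/2" .
      have "0 \<le> tau*U" using tau U1 by simp
      then have UNn: "U \<le> nn" using UN nn0 by (simp add: algebra_simps)
      have small: "4*c*Z*tau*(U/nn) \<le> 1"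
      proof -
        have "U/nn \<le> eps" using Ue nn0 by (simp add: field_simps)
        also have "\<dots> \<le> 1/(4*c*Z*tau+1)" unfolding eps_def by simp
        finally have "U/nn \<le> 1/(4*c*Z*tau+1)" .
        then have "4*c*Z*tau*(U/nn) \<le> 4*c*Z*tau*(1/(4*c*Z*tau+1))"
          using c0 Z0 tau by (intro mult_left_mono) auto
        also have "\<dots> \<le> 1" using cZt by (simp add: field_simps)
        finally show ?thesis .
      qed
      have cN: "c \<le> nn/2" using elim(3) nn_def by simp
      show ?case
      proof (rule allI, rule impI)
        fix t :: nat assume tt: "real t \<le> tau * u n"
        define y where "y s = exp (lam m lam0 (real n - u n) t s (m+Suc d)) - 1" for s
        define z where "z s = exp (lam m lam0 (real n - u n) t s (m+d)) - 1" for s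
        have y0: "y 0 = 0" unfolding y_def by simp
        have rec: "\<forall>s<t. y (Suc s) = y s + (1 + y s) * c * z s / (nn - U - real (t - s))"
        proof (intro allI impI)
          fix s assume st: "s < t"
          have "real (t - s) \<le> real t" by simp
          then have ts: "real (t - s) \<le> tau*U" using tt U_def by simp
          have "(1+tau)*U = U + tau*U" by (simp add: algebra_simps)
          then have "c \<le> (real n - u n) - real (t - s)" using UN cN ts unfolding U_def nn_def
            by linarith
          then have "exp (lam m lam0 (real n - u n) t (Suc s) (m + Suc d)) - 1 =
            (exp (lam m lam0 (real n - u n) t s (m + Suc d)) - 1) + exp (lam m lam0 (real n - u n) t s (m + Suc d)) * real (m + Suc d) * (exp (lam m lam0 (real n - u n) t s ((m + Suc d)-1)) - 1) / ((real n - u n) - real (t - s))"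
            unfolding c_def by (intro lam_rec) auto
          then show "y (Suc s) = y s + (1 + y s) * c * z s / (nn - U - real (t - s))"
            unfolding y_def z_def c_def nn_def U_def by simp
        qed
        have hz: "\<forall>s\<le>t. \<bar>z s - x*Cb*(real s/nn)^(Suc d - 1)\<bar> \<le> K' * BB U nn d"
          using elim(4) tt unfolding z_def x_def Cb_def nn_def U_def by simp
        have res: "\<forall>s\<le>t. \<bar>y s - x*C*(real s/nn)^(Suc d)\<bar> \<le> K * BB U nn (Suc d)"
          unfolding K_def
        proof (rule step_lemma[where Bp = "BB U nn d"])
          show "nn > 0" by (rule nn0)
          show "U \<ge> 1" by (rule U1)
          show "tau > 0" by (rule tau)
          show "(1+tau)*U \<le> nn/2" by (rule UN)
          show "real t \<le> tau*U" using tt U_def by simp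
          show "Suc d \<ge> 1" by simp
          show "c \<ge> 0" using c0 by simp
          show "c \<le> nn/2" by (rule cN)
          show "c*Cb = real (Suc d)*C" unfolding c_def Cb_def C_def by (rule binom_id)
          show "Cb \<ge> 0" "C \<ge> 0" "K' \<ge> 0" using Cb0 C0 K'0 by simp_all
          show "y 0 = 0" by (rule y0)
          show "\<forall>s<t. y (Suc s) = y s + (1 + y s) * c * z s / (nn - U - real (t - s))" by (rule rec)
          show "\<forall>s\<le>t. \<bar>z s - x*Cb*(real s/nn)^(Suc d - 1)\<bar> \<le> K' * BB U nn d" by (rule hz)
          show "0 \<le> BB U nn d" using BB_pos U1 UNn by simp
          show "BB U nn d \<le> (U/nn)^(Suc d - 1)" using BB_le[OF U1 UNn] by simp
          show "4*c*(\<bar>x\<bar>*Cb*tau^(Suc d - 1) + K')*tau*(U/nn) \<le> 1" using small unfolding Z_def by (simp add: algebra_simps)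
          show "BB U nn d * (U/nn) \<le> BB U nn (Suc d)" using BB_step[OF U1 UNn] by simp
          show "(U/nn)^(Suc d + 1) \<le> BB U nn (Suc d)" using BB_ge1[OF U1 UNn] by simp
          show "U^(Suc d - 1)/nn^(Suc d) \<le> BB U nn (Suc d)" using BB_ge2[OF U1 UNn] by simp
        qed
        show "\<forall>s\<le>t. \<bar>(exp (lam m lam0 (real n - u n) t s (m+Suc d)) - 1)
          - (exp lam0 - 1) * real ((m+Suc d) choose m) * (real s / real n)^(Suc d)\<bar> \<le> K * BB (u n) (real n) (Suc d)"
          using res unfolding y_def x_def C_def nn_def U_def by simp
      qed
    qed
  qed
qed



theorem mainTheorem10:
  fixes k r :: nat and lam0 \<tau> :: real and u :: "nat \<Rightarrow> real"
  assumes "2 \<le> r" "r \<le> k" "\<tau> > 0"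
    and "filterlim u at_top sequentially"
    and "(\<lambda>n. u n / real n) \<longlonglongrightarrow> 0"
  shows "\<exists>C. \<forall>\<^sub>F n in sequentially. \<forall>t::nat. real t \<le> \<tau> * u n \<longrightarrow>
           (\<forall>j\<in>{k - r + 1..k}.
              \<bar>exp (lam (k - r + 1) lam0 (real n - u n) t t j)
                - (1 + real (j choose (k - r + 1)) * (real t / real n) ^ (j - (k - r + 1))
                       * (exp lam0 - 1))\<bar>
              \<le> C * (u n powr (real j - real (k - r + 1) - 1) / real n ^ (j - (k - r + 1))
                       * max 1 (u n ^ 2 / real n)))"
proof -
  define m where "m = k - r + 1"
  have "\<forall>d. \<exists>K\<ge>0. \<forall>\<^sub>F n in sequentially. \<forall>t::nat. real t \<le> \<tau> * u n \<longrightarrow>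
     (\<forall>s\<le>t. \<bar>(exp (lam m lam0 (real n - u n) t s (m+d)) - 1)
        - (exp lam0 - 1) * real ((m+d) choose m) * (real s / real n)^d\<bar> \<le> K * BB (u n) (real n) d)"
    using mainS[OF assms(3,4,5)] by blast
  then have "\<exists>Kf. \<forall>d. Kf d \<ge> 0 \<and> (\<forall>\<^sub>F n in sequentially. \<forall>t::nat. real t \<le> \<tau> * u n \<longrightarrow>
     (\<forall>s\<le>t. \<bar>(exp (lam m lam0 (real n - u n) t s (m+d)) - 1)
        - (exp lam0 - 1) * real ((m+d) choose m) * (real s / real n)^d\<bar> \<le> Kf d * BB (u n) (real n) d))"
    by (rule choice)
  then obtain Kf where Kf: "\<forall>d. Kf d \<ge> 0 \<and> (\<forall>\<^sub>F n in sequentially. \<forall>t::nat. real t \<le> \<tau> * u n \<longrightarrow>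
     (\<forall>s\<le>t. \<bar>(exp (lam m lam0 (real n - u n) t s (m+d)) - 1)
        - (exp lam0 - 1) * real ((m+d) choose m) * (real s / real n)^d\<bar> \<le> Kf d * BB (u n) (real n) d))" ..
  define Ct where "Ct = (\<Sum>d\<le>k. Kf d)"
  have KC: "Kf d \<le> Ct" if "d \<le> k" for d
    unfolding Ct_def using that Kf by (intro member_le_sum) simp_all
  have evall: "\<forall>\<^sub>F n in sequentially. \<forall>d\<in>{..k}. \<forall>t::nat. real t \<le> \<tau> * u n \<longrightarrow>
     (\<forall>s\<le>t. \<bar>(exp (lam m lam0 (real n - u n) t s (m+d)) - 1)
        - (exp lam0 - 1) * real ((m+d) choose m) * (real s / real n)^d\<bar> \<le> Kf d * BB (u n) (real n) d)"
    using Kf by (intro eventually_ball_finite) simp_all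
  have ev1: "\<forall>\<^sub>F n in sequentially. 1 \<le> u n" using assms(4) unfolding filterlim_at_top by blast
  have ev2: "\<forall>\<^sub>F n in sequentially. u n / real n < 1" using order_tendstoD(2)[OF assms(5)] by simp
  have ev3: "\<forall>\<^sub>F n in sequentially. 1 \<le> real n"
    using filterlim_real_sequentially unfolding filterlim_at_top by blast
  show ?thesis
  proof (intro exI[of _ Ct])
    show "\<forall>\<^sub>F n in sequentially. \<forall>t::nat. real t \<le> \<tau> * u n \<longrightarrow>
           (\<forall>j\<in>{k - r + 1..k}.
              \<bar>exp (lam (k - r + 1) lam0 (real n - u n) t t j)
                - (1 + real (j choose (k - r + 1)) * (real t / real n) ^ (j - (k - r + 1))
                       * (exp lam0 - 1))\<bar>
              \<le> Ct * (u n powr (real j - real (k - r + 1) - 1) / real n ^ (j - (k - r + 1))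
                       * max 1 (u n ^ 2 / real n)))"
      using evall ev1 ev2 ev3
    proof eventually_elim
      case (elim n)
      have U1: "1 \<le> u n" using elim(2) .
      have Un: "u n \<le> real n" using elim(3) elim(4) by (simp add: field_simps)
      show ?case
      proof (intro allI impI ballI)
        fix t :: nat and j assume tt: "real t \<le> \<tau> * u n" and j: "j \<in> {k - r + 1..k}"
        define d where "d = j - m"
        have jd: "j = m + d" and dk: "d \<le> k" using j unfolding d_def m_def by auto
        have bb: "\<bar>(exp (lam m lam0 (real n - u n) t t (m+d)) - 1)
          - (exp lam0 - 1) * real ((m+d) choose m) * (real t / real n)^d\<bar> \<le> Kf d * BB (u n) (real n) d"
          using elim(1) dk tt by simp
        have le: "Kf d * BB (u n) (real n) d \<le> Ct * BB (u n) (real n) d"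
          using KC[OF dk] BB_pos[OF U1 Un] by (intro mult_right_mono)
        have bbe: "BB (u n) (real n) d = u n powr (real j - real m - 1) / real n ^ (j - m) * max 1 (u n ^ 2 / real n)"
          unfolding BB_def jd by simp
        have eq3: "exp (lam m lam0 (real n - u n) t t j) - (1 + real (j choose m) * (real t / real n) ^ (j - m) * (exp lam0 - 1))
           = (exp (lam m lam0 (real n - u n) t t (m+d)) - 1)
          - (exp lam0 - 1) * real ((m+d) choose m) * (real t / real n)^d"
          unfolding jd by (simp add: algebra_simps)
        have fin: "\<bar>exp (lam m lam0 (real n - u n) t t j) - (1 + real (j choose m) * (real t / real n) ^ (j - m) * (exp lam0 - 1))\<bar>
          \<le> Ct * (u n powr (real j - real m - 1) / real n ^ (j - m) * max 1 (u n ^ 2 / real n))"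
          unfolding eq3 bbe[symmetric] using bb le by (rule order_trans)
        show "\<bar>exp (lam (k - r + 1) lam0 (real n - u n) t t j)
                - (1 + real (j choose (k - r + 1)) * (real t / real n) ^ (j - (k - r + 1))
                       * (exp lam0 - 1))\<bar>
              \<le> Ct * (u n powr (real j - real (k - r + 1) - 1) / real n ^ (j - (k - r + 1))
                       * max 1 (u n ^ 2 / real n))"
          using fin by (simp only: m_def)
      qed
    qed
  qed
qed


end
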